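(* Let $G$ be a TDLC-group and $P$ a finitely generated projective discrete $\mathbb{Q}[G]$-module. Then the filling pseudo-norm of $P$ is a norm. Moreover, if $P$ is a direct summand of a finitely generated proper permutation module $\mathbb{Q}[\Omega]$, then $P$ is undistorted in $\mathbb{Q}[\Omega]$, i.e. the restriction of $\|\cdot\|_1^\Omega$ to $P$ is equivalent to the filling pseudo-norm of $P$.
   Context: A TDLC-group is a totally disconnected locally compact Hausdorff topological group. A discrete $\mathbb{Q}[G]$-module is a left $\mathbb{Q}[G]$-module in which every element has open stabilizer; projectivity refers to the category of discrete modules, in which a module is projective iff it is a direct summand of a proper permutation module. A $G$-set $\Omega$ is proper if all point stabilizers are compact open; $\mathbb{Q}[\Omega]$ is then a proper permutation module, finitely generated iff $\Omega/G$ is finite, with $\ell_1$-norm $\|\sum a_\omega\omega\|_1^\Omega=\sum|a_\omega|$. For a surjection $\partial:\mathbb{Q}[\Omega]\twoheadrightarrow M$ from a finitely generated proper permutation module, the filling pseudo-norm is $\|m\|_\partial=\inf\{\|x\|_1^\Omega:\partial(x)=m\}$; any two filling pseudo-norms on $M$ are equivalent (equivalence: each bounded by a constant times the other). *)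

theory Defs
  imports "HOL-Analysis.Analysis"
begin

text \<open>TDLC groups: the group is a type of class topological_group_add (additive notation,
  not necessarily commutative), Hausdorff via t2_space; we add total disconnectedness and
  local compactness.\<close>

definition totally_disconnected_space :: "'a::topological_space itself \<Rightarrow> bool" where
  "totally_disconnected_space _ \<longleftrightarrow> (\<forall>S::'a set. connected S \<longrightarrow> (\<exists>a. S \<subseteq> {a}))"

definition tdlc_group :: "'g::{t2_space, topological_group_add} itself \<Rightarrow> bool" where
  "tdlc_group T \<longleftrightarrow> totally_disconnected_space T \<and>
     locally_compact_space (euclidean :: 'g topology)"

definition discrete_QG_module ::
  "(rat \<Rightarrow> 'p::ab_group_add \<Rightarrow> 'p) \<Rightarrow> ('g::{topological_group_add} \<Rightarrow> 'p \<Rightarrow> 'p) \<Rightarrow> bool" where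
  "discrete_QG_module sm act \<longleftrightarrow>
     (\<forall>q x y. sm q (x + y) = sm q x + sm q y) \<and>
     (\<forall>q r x. sm (q + r) x = sm q x + sm r x) \<and>
     (\<forall>q r x. sm (q * r) x = sm q (sm r x)) \<and>
     (\<forall>x. sm 1 x = x) \<and>
     (\<forall>x. act 0 x = x) \<and>
     (\<forall>g h x. act (g + h) x = act g (act h x)) \<and>
     (\<forall>g x y. act g (x + y) = act g x + act g y) \<and>
     (\<forall>g q x. act g (sm q x) = sm q (act g x)) \<and>
     (\<forall>m. open {g. act g m = m})"

inductive_set QG_span ::
  "(rat \<Rightarrow> 'p::ab_group_add \<Rightarrow> 'p) \<Rightarrow> ('g \<Rightarrow> 'p \<Rightarrow> 'p) \<Rightarrow> 'p set \<Rightarrow> 'p set"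
  for sm act F where
  base: "x \<in> F \<Longrightarrow> x \<in> QG_span sm act F"
| zero: "0 \<in> QG_span sm act F"
| add: "x \<in> QG_span sm act F \<Longrightarrow> y \<in> QG_span sm act F \<Longrightarrow> x + y \<in> QG_span sm act F"
| smul: "x \<in> QG_span sm act F \<Longrightarrow> sm q x \<in> QG_span sm act F"
| act: "x \<in> QG_span sm act F \<Longrightarrow> act g x \<in> QG_span sm act F"

definition fin_gen_QG :: "(rat \<Rightarrow> 'p::ab_group_add \<Rightarrow> 'p) \<Rightarrow> ('g \<Rightarrow> 'p \<Rightarrow> 'p) \<Rightarrow> bool" where
  "fin_gen_QG sm act \<longleftrightarrow> (\<exists>F. finite F \<and> QG_span sm act F = UNIV)"

definition G_set :: "'w set \<Rightarrow> ('g::group_add \<Rightarrow> 'w \<Rightarrow> 'w) \<Rightarrow> bool" where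
  "G_set Om a \<longleftrightarrow> (\<forall>g w. w \<in> Om \<longrightarrow> a g w \<in> Om) \<and> (\<forall>w\<in>Om. a 0 w = w) \<and>
     (\<forall>g h w. w \<in> Om \<longrightarrow> a (g + h) w = a g (a h w))"

definition proper_G_set :: "'w set \<Rightarrow> ('g::topological_group_add \<Rightarrow> 'w \<Rightarrow> 'w) \<Rightarrow> bool" where
  "proper_G_set Om a \<longleftrightarrow> G_set Om a \<and>
     (\<forall>w\<in>Om. compact {g. a g w = w} \<and> open {g. a g w = w})"

definition finitely_many_orbits :: "'w set \<Rightarrow> ('g \<Rightarrow> 'w \<Rightarrow> 'w) \<Rightarrow> bool" where
  "finitely_many_orbits Om a \<longleftrightarrow> (\<exists>F. finite F \<and> F \<subseteq> Om \<and> Om = {a g w | g w. w \<in> F})"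

text \<open>The permutation module Q[Om]: finitely supported rational functions on Om
  (x = sum of x w * w), with G acting by translation of the basis.\<close>

definition supp :: "('w \<Rightarrow> rat) \<Rightarrow> 'w set" where
  "supp x = {w. x w \<noteq> 0}"

definition QPerm :: "'w set \<Rightarrow> ('w \<Rightarrow> rat) set" where
  "QPerm Om = {x. finite (supp x) \<and> supp x \<subseteq> Om}"

definition pact :: "'w set \<Rightarrow> ('g::group_add \<Rightarrow> 'w \<Rightarrow> 'w) \<Rightarrow> 'g \<Rightarrow> ('w \<Rightarrow> rat) \<Rightarrow> ('w \<Rightarrow> rat)" where
  "pact Om a g x = (\<lambda>w. if w \<in> Om then x (a (- g) w) else 0)"

definition l1_norm :: "('w \<Rightarrow> rat) \<Rightarrow> real" where
  "l1_norm x = (\<Sum>w\<in>supp x. real_of_rat \<bar>x w\<bar>)"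

definition hom_from_perm ::
  "'w set \<Rightarrow> ('g::group_add \<Rightarrow> 'w \<Rightarrow> 'w) \<Rightarrow> (rat \<Rightarrow> 'p::ab_group_add \<Rightarrow> 'p) \<Rightarrow> ('g \<Rightarrow> 'p \<Rightarrow> 'p)
   \<Rightarrow> (('w \<Rightarrow> rat) \<Rightarrow> 'p) \<Rightarrow> bool" where
  "hom_from_perm Om a sm act d \<longleftrightarrow>
     (\<forall>x\<in>QPerm Om. \<forall>y\<in>QPerm Om. d (\<lambda>w. x w + y w) = d x + d y) \<and>
     (\<forall>x\<in>QPerm Om. \<forall>q. d (\<lambda>w. q * x w) = sm q (d x)) \<and>
     (\<forall>x\<in>QPerm Om. \<forall>g. d (pact Om a g x) = act g (d x))"

definition hom_to_perm ::
  "'w set \<Rightarrow> ('g::group_add \<Rightarrow> 'w \<Rightarrow> 'w) \<Rightarrow> (rat \<Rightarrow> 'p::ab_group_add \<Rightarrow> 'p) \<Rightarrow> ('g \<Rightarrow> 'p \<Rightarrow> 'p)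
   \<Rightarrow> ('p \<Rightarrow> ('w \<Rightarrow> rat)) \<Rightarrow> bool" where
  "hom_to_perm Om a sm act i \<longleftrightarrow>
     (\<forall>m. i m \<in> QPerm Om) \<and>
     (\<forall>m n. i (m + n) = (\<lambda>w. i m w + i n w)) \<and>
     (\<forall>m q. i (sm q m) = (\<lambda>w. q * i m w)) \<and>
     (\<forall>m g. i (act g m) = pact Om a g (i m))"

definition direct_summand_of_perm ::
  "'w set \<Rightarrow> ('g::group_add \<Rightarrow> 'w \<Rightarrow> 'w) \<Rightarrow> (rat \<Rightarrow> 'p::ab_group_add \<Rightarrow> 'p) \<Rightarrow> ('g \<Rightarrow> 'p \<Rightarrow> 'p)
   \<Rightarrow> ('p \<Rightarrow> ('w \<Rightarrow> rat)) \<Rightarrow> (('w \<Rightarrow> rat) \<Rightarrow> 'p) \<Rightarrow> bool" where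
  "direct_summand_of_perm Om a sm act i p \<longleftrightarrow>
     hom_to_perm Om a sm act i \<and> hom_from_perm Om a sm act p \<and> (\<forall>m. p (i m) = m)"

definition filling_norm :: "'w set \<Rightarrow> (('w \<Rightarrow> rat) \<Rightarrow> 'p) \<Rightarrow> 'p \<Rightarrow> real" where
  "filling_norm Om d m = Inf (l1_norm ` {x \<in> QPerm Om. d x = m})"

end

theory Submission imports Defs "HOL-Library.Function_Algebras" begin


definition delta :: "'w \<Rightarrow> 'w \<Rightarrow> rat" where "delta w = (\<lambda>v. if v = w then 1 else 0)"

lemma sum_fun_apply: "finite S \<Longrightarrow> (\<Sum>i\<in>S. (f i :: 'w \<Rightarrow> 'b::comm_monoid_add)) v = (\<Sum>i\<in>S. f i v)"
  by (induction S rule: finite_induct) auto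

lemma QPerm_0: "(0::'w\<Rightarrow>rat) \<in> QPerm Om" by (simp add: QPerm_def supp_def)

lemma supp_add: "supp (x + y) \<subseteq> supp x \<union> supp y" by (auto simp: supp_def)

lemma QPerm_add: "x \<in> QPerm Om \<Longrightarrow> y \<in> QPerm Om \<Longrightarrow> x + y \<in> QPerm Om"
  unfolding QPerm_def using supp_add[of x y] by (auto intro: finite_subset)

lemma QPerm_scale: "x \<in> QPerm Om \<Longrightarrow> (\<lambda>v. q * x v) \<in> QPerm Om"
  unfolding QPerm_def supp_def by (auto intro: finite_subset)

lemma QPerm_sum: "finite S \<Longrightarrow> (\<And>i. i \<in> S \<Longrightarrow> f i \<in> QPerm Om) \<Longrightarrow> (\<Sum>i\<in>S. f i) \<in> QPerm Om"
  by (induction S rule: finite_induct) (auto intro: QPerm_0 QPerm_add)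

lemma QPerm_delta: "w \<in> Om \<Longrightarrow> delta w \<in> QPerm Om"
  by (auto simp: QPerm_def supp_def delta_def)

lemma G_set_inv: "G_set Om a \<Longrightarrow> w \<in> Om \<Longrightarrow> a (- g) (a g w) = w"
  unfolding G_set_def by (metis add.left_inverse)
lemma G_set_inv2: "G_set Om a \<Longrightarrow> w \<in> Om \<Longrightarrow> a g (a (- g) w) = w"
  unfolding G_set_def by (metis add.right_inverse)

lemma G_set_mem: "G_set Om a \<Longrightarrow> w \<in> Om \<Longrightarrow> a g w \<in> Om"
  unfolding G_set_def by blast

lemma supp_pact: assumes G: "G_set Om a" and x: "x \<in> QPerm Om"
  shows "supp (pact Om a g x) = a g ` supp x"
proof (rule set_eqI, rule iffI)
  fix v assume "v \<in> supp (pact Om a g x)"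
  then have v: "v \<in> Om" "x (a (-g) v) \<noteq> 0" by (auto simp: supp_def pact_def split: if_splits)
  have "v = a g (a (-g) v)" using G_set_inv2[OF G v(1), of g] by simp
  moreover have "a (-g) v \<in> supp x" using v(2) by (simp add: supp_def)
  ultimately show "v \<in> a g ` supp x" by (rule image_eqI)
next
  fix v assume "v \<in> a g ` supp x"
  then obtain w where w: "w \<in> supp x" "v = a g w" by auto
  then have wO: "w \<in> Om" using x by (auto simp: QPerm_def)
  have vO: "v \<in> Om" using G_set_mem[OF G wO] w(2) by simp
  have "a (-g) v = w" using G_set_inv[OF G wO] w(2) by simp
  then show "v \<in> supp (pact Om a g x)" using w(1) vO by (simp add: supp_def pact_def)
qed

lemma QPerm_pact: assumes G: "G_set Om a" and x: "x \<in> QPerm Om" shows "pact Om a g x \<in> QPerm Om"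
proof -
  have "finite (supp x)" "supp x \<subseteq> Om" using x by (auto simp: QPerm_def)
  moreover have "supp (pact Om a g x) = a g ` supp x" by (rule supp_pact[OF G x])
  ultimately show ?thesis unfolding QPerm_def using G_set_mem[OF G] by auto
qed

lemma pact_delta: assumes G: "G_set Om a" and w: "w \<in> Om" shows "pact Om a g (delta w) = delta (a g w)"
proof (rule ext)
  fix v
  show "pact Om a g (delta w) v = delta (a g w) v"
  proof (cases "v \<in> Om")
    case True
    have "(a (-g) v = w) = (v = a g w)"
      using G_set_inv[OF G w, of g] G_set_inv2[OF G True, of g] by auto
    then show ?thesis using True by (simp add: pact_def delta_def)
  next
    case False
    then have "v \<noteq> a g w" using G_set_mem[OF G w] by auto
    then show ?thesis using False by (simp add: pact_def delta_def)
  qed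
qed

lemma l1_eq: "finite S \<Longrightarrow> supp x \<subseteq> S \<Longrightarrow> l1_norm x = (\<Sum>w\<in>S. real_of_rat \<bar>x w\<bar>)"
  unfolding l1_norm_def by (rule sum.mono_neutral_left) (auto simp: supp_def)

lemma l1_nonneg: "l1_norm x \<ge> 0"
  unfolding l1_norm_def by (rule sum_nonneg) (simp add: zero_le_of_rat_iff)

lemma l1_add: "x \<in> QPerm Om \<Longrightarrow> y \<in> QPerm Om \<Longrightarrow> l1_norm (x + y) \<le> l1_norm x + l1_norm y"
proof -
  assume x: "x \<in> QPerm Om" and y: "y \<in> QPerm Om"
  let ?S = "supp x \<union> supp y"
  have f: "finite ?S" using x y by (auto simp: QPerm_def)
  have "l1_norm (x + y) = (\<Sum>w\<in>?S. real_of_rat \<bar>x w + y w\<bar>)"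
    using l1_eq[OF f supp_add[of x y]] by simp
  also have "\<dots> \<le> (\<Sum>w\<in>?S. real_of_rat \<bar>x w\<bar> + real_of_rat \<bar>y w\<bar>)"
    by (rule sum_mono) (metis abs_triangle_ineq of_rat_add of_rat_less_eq)
  also have "\<dots> = l1_norm x + l1_norm y"
    using l1_eq[OF f, of x] l1_eq[OF f, of y] by (simp add: sum.distrib)
  finally show ?thesis .
qed

lemma l1_scale: "l1_norm (\<lambda>v. q * x v) = real_of_rat \<bar>q\<bar> * l1_norm x"
proof (cases "q = 0")
  case True then show ?thesis by (simp add: l1_norm_def supp_def)
next
  case False
  then have "supp (\<lambda>v. q * x v) = supp x" by (auto simp: supp_def)
  then show ?thesis by (simp add: l1_norm_def sum_distrib_left abs_mult of_rat_mult)
qed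

lemma l1_sum: "finite S \<Longrightarrow> (\<And>i. i \<in> S \<Longrightarrow> f i \<in> QPerm Om) \<Longrightarrow> l1_norm (\<Sum>i\<in>S. f i) \<le> (\<Sum>i\<in>S. l1_norm (f i))"
proof (induction S rule: finite_induct)
  case empty then show ?case by (simp add: l1_norm_def supp_def)
next
  case (insert j S)
  have e1: "(\<Sum>i\<in>insert j S. f i) = f j + (\<Sum>i\<in>S. f i)" by (rule sum.insert[OF insert.hyps])
  have e2: "(\<Sum>i\<in>insert j S. l1_norm (f i)) = l1_norm (f j) + (\<Sum>i\<in>S. l1_norm (f i))" by (rule sum.insert[OF insert.hyps])
  have ih: "l1_norm (\<Sum>i\<in>S. f i) \<le> (\<Sum>i\<in>S. l1_norm (f i))" by (rule insert.IH) (rule insert.prems, simp)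
  have q: "(\<Sum>i\<in>S. f i) \<in> QPerm Om" by (rule QPerm_sum[OF insert.hyps(1)]) (rule insert.prems, simp)
  have "l1_norm (f j + (\<Sum>i\<in>S. f i)) \<le> l1_norm (f j) + l1_norm (\<Sum>i\<in>S. f i)"
    by (rule l1_add[OF insert.prems q]) simp
  then have "l1_norm (f j + (\<Sum>i\<in>S. f i)) \<le> l1_norm (f j) + (\<Sum>i\<in>S. l1_norm (f i))"
    by (rule order_trans) (rule add_left_mono[OF ih])
  then show ?case by (simp only: e1 e2)
qed

lemma l1_pact: assumes G: "G_set Om a" and x: "x \<in> QPerm Om" shows "l1_norm (pact Om a g x) = l1_norm x"
proof -
  have sO: "supp x \<subseteq> Om" using x by (simp add: QPerm_def)
  have inj: "inj_on (a g) (supp x)"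
  proof (rule inj_onI)
    fix u v assume u: "u \<in> supp x" and v: "v \<in> supp x" and e: "a g u = a g v"
    have "u = a (-g) (a g u)" using G_set_inv[OF G, of u g] u sO by auto
    also have "\<dots> = a (-g) (a g v)" using e by simp
    also have "\<dots> = v" using G_set_inv[OF G, of v g] v sO by auto
    finally show "u = v" .
  qed
  have "l1_norm (pact Om a g x) = (\<Sum>v\<in>a g ` supp x. real_of_rat \<bar>pact Om a g x v\<bar>)"
    unfolding l1_norm_def supp_pact[OF G x] ..
  also have "\<dots> = (\<Sum>w\<in>supp x. real_of_rat \<bar>pact Om a g x (a g w)\<bar>)"
    by (rule sum.reindex[OF inj, unfolded comp_def])
  also have "\<dots> = l1_norm x" unfolding l1_norm_def
  proof (rule sum.cong[OF refl])
    fix w assume "w \<in> supp x"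
    then have wO: "w \<in> Om" using sO by auto
    have "pact Om a g x (a g w) = x w"
      using G_set_mem[OF G wO, of g] G_set_inv[OF G wO, of g] by (simp add: pact_def)
    then show "real_of_rat \<bar>pact Om a g x (a g w)\<bar> = real_of_rat \<bar>x w\<bar>" by simp
  qed
  finally show ?thesis .
qed

lemma decomp: "x \<in> QPerm Om \<Longrightarrow> x = (\<Sum>w\<in>supp x. (\<lambda>v. x w * delta w v))"
proof (rule ext)
  fix v assume x: "x \<in> QPerm Om"
  have f: "finite (supp x)" using x by (simp add: QPerm_def)
  have "(\<Sum>w\<in>supp x. (\<lambda>v. x w * delta w v)) v = (\<Sum>w\<in>supp x. x w * delta w v)"
    by (rule sum_fun_apply[OF f])
  also have "\<dots> = (\<Sum>w\<in>supp x. if v = w then x v else 0)"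
    by (rule sum.cong) (auto simp: delta_def)
  also have "\<dots> = x v"
    using f by (simp add: sum.delta') (simp add: supp_def)
  finally show "x v = (\<Sum>w\<in>supp x. (\<lambda>v. x w * delta w v)) v" by simp
qed

lemma hom_addD: assumes h: "hom_from_perm Om a sm act d"
  shows "\<forall>x\<in>QPerm Om. \<forall>y\<in>QPerm Om. d (\<lambda>w. x w + y w) = d x + d y"
  using h[unfolded hom_from_perm_def] by (rule conjunct1)

lemma hom_smD: assumes h: "hom_from_perm Om a sm act d"
  shows "\<forall>x\<in>QPerm Om. \<forall>q. d (\<lambda>w. q * x w) = sm q (d x)"
  using h[unfolded hom_from_perm_def] by (rule conjunct1[OF conjunct2])

lemma hom_actD: assumes h: "hom_from_perm Om a sm act d"
  shows "\<forall>x\<in>QPerm Om. \<forall>g. d (pact Om a g x) = act g (d x)"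
  using h[unfolded hom_from_perm_def] by (rule conjunct2[OF conjunct2])

lemma hom_add: assumes h: "hom_from_perm Om a sm act d" and x: "x \<in> QPerm Om" and y: "y \<in> QPerm Om"
  shows "d (x + y) = d x + d y"
proof -
  have "d (\<lambda>w. x w + y w) = d x + d y" using hom_addD[OF h] x y by blast
  then show ?thesis by (simp only: plus_fun_def)
qed

lemma hom_0: assumes h: "hom_from_perm Om a sm act d" shows "d 0 = 0"
proof -
  have "d (0 + 0) = d 0 + d 0" by (rule hom_add[OF h QPerm_0 QPerm_0])
  then show ?thesis by simp
qed

lemma hom_sum: assumes h: "hom_from_perm Om a sm act d" shows "finite S \<Longrightarrow> (\<And>i. i \<in> S \<Longrightarrow> f i \<in> QPerm Om) \<Longrightarrow>
   d (\<Sum>i\<in>S. f i) = (\<Sum>i\<in>S. d (f i))"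
proof (induction S rule: finite_induct)
  case empty then show ?case using hom_0[OF h] by (metis sum.empty)
next
  case (insert j S)
  have q: "sum f S \<in> QPerm Om" "f j \<in> QPerm Om" using insert by (auto intro!: QPerm_sum)
  have "d (sum f (insert j S)) = d (f j + sum f S)" by (simp only: sum.insert[OF insert.hyps])
  also have "\<dots> = d (f j) + d (sum f S)" by (rule hom_add[OF h q(2) q(1)])
  also have "\<dots> = d (f j) + (\<Sum>i\<in>S. d (f i))"
  proof -
    have "d (sum f S) = (\<Sum>i\<in>S. d (f i))" by (rule insert.IH) (rule insert.prems, simp)
    then show ?thesis by (rule arg_cong)
  qed
  finally show ?case by (simp only: sum.insert[OF insert.hyps])
qed

lemma ihom_add: assumes h: "hom_to_perm Om a sm act i" shows "i (m + n) = i m + i n"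
proof -
  have "\<forall>m n. i (m + n) = (\<lambda>w. i m w + i n w)" using h[unfolded hom_to_perm_def] by (rule conjunct1[OF conjunct2])
  from this[rule_format, of m n] show ?thesis by (simp only: plus_fun_def)
qed

lemma ihom_0: assumes h: "hom_to_perm Om a sm act i" shows "i 0 = 0"
proof -
  have e: "i (0 + 0) = i 0 + i 0" by (rule ihom_add[OF h])
  then show ?thesis by simp
qed

lemma ihom_sum: assumes h: "hom_to_perm Om a sm act i" shows "finite S \<Longrightarrow> i (\<Sum>j\<in>S. f j) = (\<Sum>j\<in>S. i (f j))"
proof (induction S rule: finite_induct)
  case empty then show ?case using ihom_0[OF h] by (metis sum.empty)
next
  case (insert j S)
  have "i (sum f (insert j S)) = i (f j + sum f S)" by (simp only: sum.insert[OF insert.hyps])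
  also have "\<dots> = i (f j) + i (sum f S)" by (rule ihom_add[OF h])
  also have "\<dots> = i (f j) + (\<Sum>j\<in>S. i (f j))" using insert.IH by (rule arg_cong)
  finally show ?case by (simp only: sum.insert[OF insert.hyps])
qed



lemma ihom_mem: "hom_to_perm Om a sm act i \<Longrightarrow> i m \<in> QPerm Om"
  unfolding hom_to_perm_def by (rule conjunct1[THEN spec])

lemma ihom_sm: assumes h: "hom_to_perm Om a sm act i" shows "i (sm q m) = (\<lambda>w. q * i m w)"
proof -
  have "\<forall>m q. i (sm q m) = (\<lambda>w. q * i m w)" using h[unfolded hom_to_perm_def] by (rule conjunct1[OF conjunct2[OF conjunct2]])
  then show ?thesis by blast
qed

lemma ihom_act: assumes h: "hom_to_perm Om a sm act i" shows "i (act g m) = pact Om a g (i m)"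
proof -
  have "\<forall>m g. i (act g m) = pact Om a g (i m)" using h[unfolded hom_to_perm_def] by (rule conjunct2[OF conjunct2[OF conjunct2]])
  then show ?thesis by blast
qed

lemma hom_sm: "hom_from_perm Om a sm act d \<Longrightarrow> x \<in> QPerm Om \<Longrightarrow> d (\<lambda>w. q * x w) = sm q (d x)"
  using hom_smD by blast

lemma hom_act: "hom_from_perm Om a sm act d \<Longrightarrow> x \<in> QPerm Om \<Longrightarrow> d (pact Om a g x) = act g (d x)"
  using hom_actD by blast

lemma orbitsD: assumes "finitely_many_orbits Om a"
  obtains F where "finite F" "F \<subseteq> Om" "\<And>w. w \<in> Om \<Longrightarrow> \<exists>g w0. w0 \<in> F \<and> w = a g w0"
  using assms unfolding finitely_many_orbits_def by blast

lemma decomp_sum: "x \<in> QPerm Om \<Longrightarrow> finite (supp x) \<and> (\<forall>w\<in>supp x. w \<in> Om)"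
  by (auto simp: QPerm_def)

lemma bound1:
  assumes G: "G_set Om a" and orb: "finitely_many_orbits Om a" and d: "hom_from_perm Om a sm act d"
    and G2: "G_set Om2 a2" and i: "hom_to_perm Om2 a2 sm act i"
  shows "\<exists>K\<ge>0. \<forall>x\<in>QPerm Om. l1_norm (i (d x)) \<le> K * l1_norm x"
proof -
  obtain F where F: "finite F" "F \<subseteq> Om" "\<And>w. w \<in> Om \<Longrightarrow> \<exists>g w0. w0 \<in> F \<and> w = a g w0"
    using orbitsD[OF orb] by blast
  define K where "K = (\<Sum>w0\<in>F. l1_norm (i (d (delta w0))))"
  have K0: "K \<ge> 0" unfolding K_def by (rule sum_nonneg) (rule l1_nonneg)
  have Kw: "l1_norm (i (d (delta w))) \<le> K" if w: "w \<in> Om" for w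
  proof -
    obtain g w0 where g: "w0 \<in> F" "w = a g w0" using F(3)[OF w] by blast
    have w0: "w0 \<in> Om" using g F(2) by auto
    have "i (d (delta w)) = i (d (pact Om a g (delta w0)))" using pact_delta[OF G w0] g by simp
    also have "\<dots> = i (act g (d (delta w0)))" using hom_act[OF d QPerm_delta[OF w0]] by simp
    also have "\<dots> = pact Om2 a2 g (i (d (delta w0)))" by (rule ihom_act[OF i])
    finally have "l1_norm (i (d (delta w))) = l1_norm (i (d (delta w0)))"
      using l1_pact[OF G2 ihom_mem[OF i]] by simp
    also have "\<dots> \<le> K" unfolding K_def
      by (rule member_le_sum[OF g(1) _ F(1)]) (rule l1_nonneg)
    finally show ?thesis .
  qed
  have "l1_norm (i (d x)) \<le> K * l1_norm x" if x: "x \<in> QPerm Om" for x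
  proof -
    have fs: "finite (supp x)" and sO: "supp x \<subseteq> Om" using x by (simp_all add: QPerm_def)
    have mem: "(\<lambda>v. x w * delta w v) \<in> QPerm Om" if "w \<in> supp x" for w
      by (rule QPerm_scale[OF QPerm_delta]) (use that sO in blast)
    have "d x = d (\<Sum>w\<in>supp x. (\<lambda>v. x w * delta w v))" using decomp[OF x] by simp
    also have "\<dots> = (\<Sum>w\<in>supp x. d (\<lambda>v. x w * delta w v))" by (rule hom_sum[OF d fs mem])
    also have "\<dots> = (\<Sum>w\<in>supp x. sm (x w) (d (delta w)))"
      by (rule sum.cong[OF refl], rule hom_sm[OF d QPerm_delta]) (use sO in auto)
    finally have dx: "d x = (\<Sum>w\<in>supp x. sm (x w) (d (delta w)))" .
    have "i (d x) = (\<Sum>w\<in>supp x. i (sm (x w) (d (delta w))))" unfolding dx by (rule ihom_sum[OF i fs])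
    also have "\<dots> = (\<Sum>w\<in>supp x. (\<lambda>v. x w * i (d (delta w)) v))"
      by (rule sum.cong[OF refl], rule ihom_sm[OF i])
    finally have idx: "i (d x) = (\<Sum>w\<in>supp x. (\<lambda>v. x w * i (d (delta w)) v))" .
    have "l1_norm (i (d x)) \<le> (\<Sum>w\<in>supp x. l1_norm (\<lambda>v. x w * i (d (delta w)) v))"
      unfolding idx by (rule l1_sum[OF fs]) (rule QPerm_scale[OF ihom_mem[OF i]])
    also have "\<dots> = (\<Sum>w\<in>supp x. real_of_rat \<bar>x w\<bar> * l1_norm (i (d (delta w))))"
      by (rule sum.cong[OF refl]) (rule l1_scale)
    also have "\<dots> \<le> (\<Sum>w\<in>supp x. real_of_rat \<bar>x w\<bar> * K)"
      by (rule sum_mono, rule mult_left_mono) (use Kw sO in \<open>auto simp: zero_le_of_rat_iff\<close>)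
    also have "\<dots> = K * l1_norm x" unfolding l1_norm_def by (simp add: sum_distrib_left mult.commute)
    finally show ?thesis .
  qed
  then show ?thesis using K0 by blast
qed

lemma bound2:
  assumes G: "G_set Om a" and orb: "finitely_many_orbits Om a" and p: "hom_from_perm Om a sm act p"
    and G2: "G_set Om2 a2" and d: "hom_from_perm Om2 a2 sm act d" and surj: "d ` QPerm Om2 = UNIV"
  shows "\<exists>K\<ge>0. \<forall>y\<in>QPerm Om. \<exists>x\<in>QPerm Om2. d x = p y \<and> l1_norm x \<le> K * l1_norm y"
proof -
  obtain F where F: "finite F" "F \<subseteq> Om" "\<And>w. w \<in> Om \<Longrightarrow> \<exists>g w0. w0 \<in> F \<and> w = a g w0"
    using orbitsD[OF orb] by blast
  have "\<forall>w0. \<exists>z. z \<in> QPerm Om2 \<and> d z = p (delta w0)" using surj by (metis UNIV_I imageE)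
  then obtain z where z: "\<And>w0. z w0 \<in> QPerm Om2" "\<And>w0. d (z w0) = p (delta w0)" by metis
  define K where "K = (\<Sum>w0\<in>F. l1_norm (z w0))"
  have K0: "K \<ge> 0" unfolding K_def by (rule sum_nonneg) (rule l1_nonneg)
  have Kw: "\<exists>u. u \<in> QPerm Om2 \<and> d u = p (delta w) \<and> l1_norm u \<le> K" if w: "w \<in> Om" for w
  proof -
    obtain g w0 where g: "w0 \<in> F" "w = a g w0" using F(3)[OF w] by blast
    have w0: "w0 \<in> Om" using g F(2) by auto
    have "d (pact Om2 a2 g (z w0)) = act g (p (delta w0))" using hom_act[OF d z(1)] z(2) by simp
    also have "\<dots> = p (pact Om a g (delta w0))" using hom_act[OF p QPerm_delta[OF w0]] by simp
    also have "\<dots> = p (delta w)" using pact_delta[OF G w0] g by simp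
    finally have e: "d (pact Om2 a2 g (z w0)) = p (delta w)" .
    have "l1_norm (pact Om2 a2 g (z w0)) = l1_norm (z w0)" by (rule l1_pact[OF G2 z(1)])
    also have "\<dots> \<le> K" unfolding K_def
      by (rule member_le_sum[OF g(1) _ F(1)]) (rule l1_nonneg)
    finally show ?thesis using e QPerm_pact[OF G2 z(1)] by blast
  qed
  define L where "L w = (SOME u. u \<in> QPerm Om2 \<and> d u = p (delta w) \<and> l1_norm u \<le> K)" for w
  have L: "L w \<in> QPerm Om2" "d (L w) = p (delta w)" "l1_norm (L w) \<le> K" if "w \<in> Om" for w
  proof -
    have "L w \<in> QPerm Om2 \<and> d (L w) = p (delta w) \<and> l1_norm (L w) \<le> K"
      unfolding L_def by (rule someI_ex[OF Kw[OF that]])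
    then show "L w \<in> QPerm Om2" "d (L w) = p (delta w)" "l1_norm (L w) \<le> K" by simp_all
  qed
  have "\<exists>x\<in>QPerm Om2. d x = p y \<and> l1_norm x \<le> K * l1_norm y" if y: "y \<in> QPerm Om" for y
  proof -
    have fs: "finite (supp y)" and sO: "supp y \<subseteq> Om" using y by (simp_all add: QPerm_def)
    have mem: "(\<lambda>v. y w * delta w v) \<in> QPerm Om" if "w \<in> supp y" for w
      by (rule QPerm_scale[OF QPerm_delta]) (use that sO in blast)
    have memL: "(\<lambda>v. y w * L w v) \<in> QPerm Om2" if "w \<in> supp y" for w
      by (rule QPerm_scale[OF L(1)]) (use that sO in blast)
    define x where "x = (\<Sum>w\<in>supp y. (\<lambda>v. y w * L w v))"
    have xQ: "x \<in> QPerm Om2" unfolding x_def by (rule QPerm_sum[OF fs memL])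
    have "d x = (\<Sum>w\<in>supp y. d (\<lambda>v. y w * L w v))" unfolding x_def by (rule hom_sum[OF d fs memL])
    also have "\<dots> = (\<Sum>w\<in>supp y. p (\<lambda>v. y w * delta w v))"
    proof (rule sum.cong[OF refl])
      fix w assume w: "w \<in> supp y"
      then have wO: "w \<in> Om" using sO by auto
      have "d (\<lambda>v. y w * L w v) = sm (y w) (d (L w))" by (rule hom_sm[OF d L(1)[OF wO]])
      also have "\<dots> = sm (y w) (p (delta w))" using L(2)[OF wO] by simp
      also have "\<dots> = p (\<lambda>v. y w * delta w v)" by (rule hom_sm[OF p QPerm_delta[OF wO], symmetric])
      finally show "d (\<lambda>v. y w * L w v) = p (\<lambda>v. y w * delta w v)" .
    qed
    also have "\<dots> = p (\<Sum>w\<in>supp y. (\<lambda>v. y w * delta w v))" by (rule hom_sum[OF p fs mem, symmetric])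
    also have "\<dots> = p y" using decomp[OF y] by simp
    finally have dx: "d x = p y" .
    have "l1_norm x \<le> (\<Sum>w\<in>supp y. l1_norm (\<lambda>v. y w * L w v))"
      unfolding x_def by (rule l1_sum[OF fs memL])
    also have "\<dots> = (\<Sum>w\<in>supp y. real_of_rat \<bar>y w\<bar> * l1_norm (L w))"
      by (rule sum.cong[OF refl]) (rule l1_scale)
    also have "\<dots> \<le> (\<Sum>w\<in>supp y. real_of_rat \<bar>y w\<bar> * K)"
      by (rule sum_mono, rule mult_left_mono) (use L(3) sO in \<open>auto simp: zero_le_of_rat_iff\<close>)
    also have "\<dots> = K * l1_norm y" unfolding l1_norm_def by (simp add: sum_distrib_left mult.commute)
    finally show ?thesis using xQ dx by blast
  qed
  then show ?thesis using K0 by blast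
qed



lemma inf_bound:
  fixes S :: "real set"
  assumes ne: "S \<noteq> {}" and nn: "\<And>s. s \<in> S \<Longrightarrow> 0 \<le> s" and K: "K \<ge> 0"
    and b: "\<And>s. s \<in> S \<Longrightarrow> c \<le> K * s"
  shows "c \<le> K * Inf S"
proof (cases "K = 0")
  case True
  obtain s where "s \<in> S" using ne by blast
  then show ?thesis using b True by fastforce
next
  case False
  then have Kp: "K > 0" using K by simp
  have "c / K \<le> Inf S"
  proof (rule cInf_greatest[OF ne])
    fix s assume "s \<in> S"
    then have "c \<le> K * s" by (rule b)
    then show "c / K \<le> s" using Kp by (simp add: divide_le_eq mult.commute)
  qed
  then show ?thesis using Kp by (simp add: divide_le_eq mult.commute)
qed

lemma fill_set:
  assumes surj: "d ` QPerm Om = UNIV"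
  shows "l1_norm ` {x \<in> QPerm Om. d x = m} \<noteq> {}" "bdd_below (l1_norm ` {x \<in> QPerm Om. d x = m})"
proof -
  obtain x where "x \<in> QPerm Om" "d x = m" using surj by (metis UNIV_I imageE)
  then show "l1_norm ` {x \<in> QPerm Om. d x = m} \<noteq> {}" by blast
  show "bdd_below (l1_norm ` {x \<in> QPerm Om. d x = m})"
    by (rule bdd_belowI[where m=0]) (use l1_nonneg in auto)
qed

lemma fill_nonneg: "d ` QPerm Om = UNIV \<Longrightarrow> 0 \<le> filling_norm Om d m"
  unfolding filling_norm_def by (rule cInf_greatest[OF fill_set(1)]) (auto simp: l1_nonneg)

lemma fill_le: "d ` QPerm Om = UNIV \<Longrightarrow> x \<in> QPerm Om \<Longrightarrow> filling_norm Om d (d x) \<le> l1_norm x"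
  unfolding filling_norm_def by (rule cInf_lower[OF _ fill_set(2)]) auto

lemma l1_zero: assumes x: "x \<in> QPerm Om" and z: "l1_norm x \<le> 0" shows "x = 0"
proof -
  have f: "finite (supp x)" using x by (simp add: QPerm_def)
  have "\<forall>w\<in>supp x. real_of_rat \<bar>x w\<bar> = 0"
    using z l1_nonneg[of x] unfolding l1_norm_def
    by (subst sum_nonneg_eq_0_iff[OF f, symmetric]) (auto simp: zero_le_of_rat_iff)
  then show ?thesis by (auto simp: supp_def)
qed

lemma proper_G: "proper_G_set Om a \<Longrightarrow> G_set Om a"
  by (simp add: proper_G_set_def)

lemma lower_fill:
  assumes G: "G_set Om a" and orb: "finitely_many_orbits Om a" and d: "hom_from_perm Om a sm act d"
    and surj: "d ` QPerm Om = UNIV"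
    and G2: "G_set Om2 a2" and i: "hom_to_perm Om2 a2 sm act i"
  shows "\<exists>K\<ge>0. \<forall>m. l1_norm (i m) \<le> K * filling_norm Om d m"
proof -
  obtain K where K: "K \<ge> 0" "\<And>x. x \<in> QPerm Om \<Longrightarrow> l1_norm (i (d x)) \<le> K * l1_norm x"
    using bound1[OF G orb d G2 i] by blast
  have "l1_norm (i m) \<le> K * filling_norm Om d m" for m
    unfolding filling_norm_def
    by (rule inf_bound[OF fill_set(1)[OF surj] _ K(1)]) (use K(2) l1_nonneg in auto)
  then show ?thesis using K(1) by blast
qed

theorem proposition4p4:
  fixes sm :: "rat \<Rightarrow> 'p::ab_group_add \<Rightarrow> 'p"
    and act :: "'g::{t2_space, topological_group_add} \<Rightarrow> 'p \<Rightarrow> 'p"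
    and Om0 :: "'v set" and a0 :: "'g \<Rightarrow> 'v \<Rightarrow> 'v"
    and i0 :: "'p \<Rightarrow> ('v \<Rightarrow> rat)" and p0 :: "('v \<Rightarrow> rat) \<Rightarrow> 'p"
  assumes "tdlc_group TYPE('g)"
    and "discrete_QG_module sm act"
    and "fin_gen_QG sm act"
    and "proper_G_set Om0 a0"
    and "direct_summand_of_perm Om0 a0 sm act i0 p0"
  shows
    "(\<forall>(Om :: 'w set) (a :: 'g \<Rightarrow> 'w \<Rightarrow> 'w) d.
        proper_G_set Om a \<and> finitely_many_orbits Om a \<and> hom_from_perm Om a sm act d \<and>
        d ` QPerm Om = UNIV \<longrightarrow>
        (\<forall>m. filling_norm Om d m = 0 \<longrightarrow> m = 0))
   \<and> (\<forall>(Om :: 'u set) (a :: 'g \<Rightarrow> 'u \<Rightarrow> 'u) i p.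
        proper_G_set Om a \<and> finitely_many_orbits Om a \<and> direct_summand_of_perm Om a sm act i p \<longrightarrow>
        (\<forall>(Om' :: 'w set) (a' :: 'g \<Rightarrow> 'w \<Rightarrow> 'w) d.
           proper_G_set Om' a' \<and> finitely_many_orbits Om' a' \<and> hom_from_perm Om' a' sm act d \<and>
           d ` QPerm Om' = UNIV \<longrightarrow>
           (\<exists>C>0. \<forall>m. l1_norm (i m) \<le> C * filling_norm Om' d m \<and>
                      filling_norm Om' d m \<le> C * l1_norm (i m))))"
proof (intro conjI allI impI)
  fix Om :: "'w set" and a :: "'g \<Rightarrow> 'w \<Rightarrow> 'w" and d m
  assume h: "proper_G_set Om a \<and> finitely_many_orbits Om a \<and> hom_from_perm Om a sm act d \<and> d ` QPerm Om = UNIV"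
    and z: "filling_norm Om d m = 0"
  have ds: "hom_to_perm Om0 a0 sm act i0" "hom_from_perm Om0 a0 sm act p0" "\<And>m. p0 (i0 m) = m"
    using assms(5) unfolding direct_summand_of_perm_def by blast+
  obtain K where K: "K \<ge> 0" "\<And>m. l1_norm (i0 m) \<le> K * filling_norm Om d m"
    using lower_fill[OF proper_G[of Om a] _ _ _ proper_G[OF assms(4)] ds(1)] h by blast
  have "l1_norm (i0 m) \<le> 0" using K(2)[of m] z by simp
  then have "i0 m = 0" by (rule l1_zero[OF ihom_mem[OF ds(1)]])
  then have "m = p0 0" using ds(3)[of m] by simp
  then show "m = 0" using hom_0[OF ds(2)] by simp
next
  fix Om :: "'u set" and a :: "'g \<Rightarrow> 'u \<Rightarrow> 'u" and i p
    and Om' :: "'w set" and a' :: "'g \<Rightarrow> 'w \<Rightarrow> 'w" and d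
  assume h1: "proper_G_set Om a \<and> finitely_many_orbits Om a \<and> direct_summand_of_perm Om a sm act i p"
    and h2: "proper_G_set Om' a' \<and> finitely_many_orbits Om' a' \<and> hom_from_perm Om' a' sm act d \<and> d ` QPerm Om' = UNIV"
  have ds: "hom_to_perm Om a sm act i" "hom_from_perm Om a sm act p" "\<And>m. p (i m) = m"
    using h1 unfolding direct_summand_of_perm_def by blast+
  have G: "G_set Om a" and G': "G_set Om' a'" using h1 h2 proper_G by blast+
  have surj: "d ` QPerm Om' = UNIV" using h2 by blast
  obtain K1 where K1: "K1 \<ge> 0" "\<And>m. l1_norm (i m) \<le> K1 * filling_norm Om' d m"
    using lower_fill[OF G' _ _ surj G ds(1)] h2 by blast
  obtain K2 where K2: "K2 \<ge> 0" "\<And>y. y \<in> QPerm Om \<Longrightarrow> \<exists>x\<in>QPerm Om'. d x = p y \<and> l1_norm x \<le> K2 * l1_norm y"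
    using bound2[OF G _ ds(2) G' _ surj] h1 h2 by blast
  define C where "C = max (max K1 K2) 1"
  have C: "C > 0" "K1 \<le> C" "K2 \<le> C" unfolding C_def by auto
  show "\<exists>C>0. \<forall>m. l1_norm (i m) \<le> C * filling_norm Om' d m \<and> filling_norm Om' d m \<le> C * l1_norm (i m)"
  proof (intro exI[of _ C] conjI allI C(1))
    fix m
    have fn: "0 \<le> filling_norm Om' d m" by (rule fill_nonneg[OF surj])
    have "l1_norm (i m) \<le> K1 * filling_norm Om' d m" by (rule K1(2))
    also have "\<dots> \<le> C * filling_norm Om' d m" by (rule mult_right_mono[OF C(2) fn])
    finally show "l1_norm (i m) \<le> C * filling_norm Om' d m" .
    obtain x where x: "x \<in> QPerm Om'" "d x = p (i m)" "l1_norm x \<le> K2 * l1_norm (i m)"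
      using K2(2)[OF ihom_mem[OF ds(1)]] by blast
    have "filling_norm Om' d m = filling_norm Om' d (d x)" using x(2) ds(3) by simp
    also have "\<dots> \<le> l1_norm x" by (rule fill_le[OF surj x(1)])
    also have "\<dots> \<le> K2 * l1_norm (i m)" by (rule x(3))
    also have "\<dots> \<le> C * l1_norm (i m)" by (rule mult_right_mono[OF C(3) l1_nonneg])
    finally show "filling_norm Om' d m \<le> C * l1_norm (i m)" .
  qed
qed

end
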